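(* Let $G$ be a connected graph on $n\ge2$ vertices, $\alpha\in\mathbb{R}$, with vertices labeled so that, writing $s_k=({}^\alpha\mathbb{M})_k+\mathbb{D}_k$, we have $s_1\ge s_2\ge\cdots\ge s_n$. Let $S=\min_{1\le i\le n}\mathbb{D}_i$ and $T=\min_{1\le i\ne j\le n}d_{ij}\mathbb{D}_j^\alpha/\mathbb{D}_i^\alpha$. Then \[\rho(\mathbb{DQ}(G))\ge \frac{s_n+S-T+\sqrt{(s_n-S+T)^2+4T\sum_{k=1}^{n-1}(s_k-s_n)}}{2}.\] Equality holds if and only if $s_1=\cdots=s_n$, or for some $2\le t\le n$: (i) $\mathbb{D}_k=S$ for $1\le k\le t-1$; (ii) $d_{kl}\mathbb{D}_l^\alpha/\mathbb{D}_k^\alpha=T$ for all $1\le k\le n$, $1\le l\le t-1$, $k\ne l$; (iii) $s_t=\cdots=s_n$.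
   Context: $\mathbb{D}(G)=(d_{ij})$ is the distance matrix of $G$, $\mathbb{D}_i=\sum_j d_{ij}$ the transmission of $v_i$, and $\mathbb{DQ}(G)=\mathrm{diag}(\mathbb{D}_1,\dots,\mathbb{D}_n)+\mathbb{D}(G)$ the distance signless Laplacian matrix. $({}^\alpha\mathbb{M})_i=\frac{\sum_{j=1}^n d_{ij}\mathbb{D}_j^\alpha}{\mathbb{D}_i^\alpha}$ is the generalized average transmission. $\rho$ is the spectral radius. *)

theory Defs
  imports Complex_Main "Jordan_Normal_Form.Spectral_Radius"
begin

text \<open>A simple graph on the vertex set {0..<n}, given by a symmetric irreflexive
  adjacency relation E (only its restriction to {0..<n} matters).\<close>

definition simple_graph :: "nat \<Rightarrow> (nat \<Rightarrow> nat \<Rightarrow> bool) \<Rightarrow> bool" where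
  "simple_graph n E \<longleftrightarrow> (\<forall>i<n. \<forall>j<n. E i j \<longleftrightarrow> E j i) \<and> (\<forall>i<n. \<not> E i i)"

definition is_walk :: "nat \<Rightarrow> (nat \<Rightarrow> nat \<Rightarrow> bool) \<Rightarrow> nat list \<Rightarrow> bool" where
  "is_walk n E p \<longleftrightarrow> p \<noteq> [] \<and> set p \<subseteq> {0..<n} \<and>
     (\<forall>k. Suc k < length p \<longrightarrow> E (p ! k) (p ! Suc k))"

definition connected_graph :: "nat \<Rightarrow> (nat \<Rightarrow> nat \<Rightarrow> bool) \<Rightarrow> bool" where
  "connected_graph n E \<longleftrightarrow> (\<forall>i<n. \<forall>j<n. \<exists>p. is_walk n E p \<and> hd p = i \<and> last p = j)"

definition gdist :: "nat \<Rightarrow> (nat \<Rightarrow> nat \<Rightarrow> bool) \<Rightarrow> nat \<Rightarrow> nat \<Rightarrow> nat" where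
  "gdist n E i j = (LEAST k. \<exists>p. is_walk n E p \<and> hd p = i \<and> last p = j \<and> length p = Suc k)"

definition transmission :: "nat \<Rightarrow> (nat \<Rightarrow> nat \<Rightarrow> bool) \<Rightarrow> nat \<Rightarrow> real" where
  "transmission n E i = (\<Sum>j<n. real (gdist n E i j))"

definition DQ_mat :: "nat \<Rightarrow> (nat \<Rightarrow> nat \<Rightarrow> bool) \<Rightarrow> real mat" where
  "DQ_mat n E = mat n n (\<lambda>(i,j). (if i = j then transmission n E i else 0) + real (gdist n E i j))"

definition gen_avg_trans :: "nat \<Rightarrow> (nat \<Rightarrow> nat \<Rightarrow> bool) \<Rightarrow> real \<Rightarrow> nat \<Rightarrow> real" where
  "gen_avg_trans n E \<alpha> i =
     (\<Sum>j<n. real (gdist n E i j) * transmission n E j powr \<alpha>) / transmission n E i powr \<alpha>"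

definition rho :: "real mat \<Rightarrow> real" where
  "rho A = spectral_radius (map_mat complex_of_real A)"

end

theory Submission
  imports Defs
begin


lemma mv_sum:
  assumes "A \<in> carrier_mat n n" "u \<in> carrier_vec n" "i < n"
  shows "(A *\<^sub>v u) $ i = (\<Sum>j<n. A $$ (i,j) * u $ j)"
  using assms by (auto simp: scalar_prod_def lessThan_atLeast0 intro!: sum.cong)

lemma pow_growth:
  fixes B :: "real mat"
  assumes B: "B \<in> carrier_mat n n" and nn: "\<forall>i<n. \<forall>j<n. B $$ (i,j) \<ge> 0"
    and g: "g \<ge> 0" and y: "\<forall>i<n. y i \<ge> 0"
    and gr: "\<forall>i<n. (\<Sum>j<n. B $$ (i,j) * y j) \<ge> g * y i"
  shows "\<forall>u \<in> carrier_vec n. \<forall>\<beta>\<ge>0. (\<forall>i<n. u $ i \<ge> \<beta> * y i) \<longrightarrow>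
           (\<forall>i<n. (B ^\<^sub>m k *\<^sub>v u) $ i \<ge> \<beta> * g ^ k * y i)"
proof (induction k)
  case 0
  then show ?case using B by auto
next
  case (Suc k)
  show ?case
  proof (intro ballI allI impI)
    fix u :: "real vec" and \<beta> :: real and i
    assume u: "u \<in> carrier_vec n" and b: "\<beta> \<ge> 0" and ub: "\<forall>i<n. u $ i \<ge> \<beta> * y i" and i: "i < n"
    have Bu: "B *\<^sub>v u \<in> carrier_vec n" using B u by auto
    have "\<forall>i<n. (B *\<^sub>v u) $ i \<ge> (\<beta> * g) * y i"
    proof (intro allI impI)
      fix i assume i: "i < n"
      have "(B *\<^sub>v u) $ i = (\<Sum>j<n. B $$ (i,j) * u $ j)" using mv_sum[OF B u i] .
      also have "\<dots> \<ge> (\<Sum>j<n. B $$ (i,j) * (\<beta> * y j))"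
        by (rule sum_mono) (use nn ub i in \<open>auto intro: mult_left_mono\<close>)
      moreover have "(\<Sum>j<n. B $$ (i,j) * (\<beta> * y j)) = \<beta> * (\<Sum>j<n. B $$ (i,j) * y j)"
        by (simp add: sum_distrib_left mult_ac)
      moreover have "\<beta> * (\<Sum>j<n. B $$ (i,j) * y j) \<ge> \<beta> * (g * y i)"
        using gr i b by (auto intro: mult_left_mono)
      ultimately show "(B *\<^sub>v u) $ i \<ge> (\<beta> * g) * y i" by (simp add: mult_ac)
    qed
    with Suc.IH Bu b g have "\<forall>i<n. (B ^\<^sub>m k *\<^sub>v (B *\<^sub>v u)) $ i \<ge> (\<beta> * g) * g ^ k * y i"
      by auto
    moreover have "B ^\<^sub>m Suc k *\<^sub>v u = B ^\<^sub>m k *\<^sub>v (B *\<^sub>v u)"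
      using B u by (simp add: assoc_mult_mat_vec[of _ n n _ n])
    ultimately show "(B ^\<^sub>m Suc k *\<^sub>v u) $ i \<ge> \<beta> * g ^ Suc k * y i"
      using i by (simp add: mult_ac)
  qed
qed

lemma sr_upper:
  fixes Q :: "real mat"
  assumes Q: "Q \<in> carrier_mat n n" and n: "n > 0"
    and nn: "\<forall>i<n. \<forall>j<n. Q $$ (i,j) \<ge> 0" and ypos: "\<forall>i<n. y i > 0"
    and eig: "\<forall>i<n. (\<Sum>j<n. Q $$ (i,j) * y j) \<le> \<mu> * y i"
  shows "spectral_radius (map_mat complex_of_real Q) \<le> \<mu>"
proof -
  let ?A = "map_mat complex_of_real Q"
  have A: "?A \<in> carrier_mat n n" using Q by auto
  from spectral_radius_mem_max(1)[OF A n] obtain lam where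
    lam: "lam \<in> spectrum ?A" and r: "spectral_radius ?A = norm lam" by auto
  from lam obtain v where ev: "eigenvector ?A v lam" unfolding spectrum_def eigenvalue_def by auto
  hence v: "v \<in> carrier_vec n" "v \<noteq> 0\<^sub>v n" "?A *\<^sub>v v = lam \<cdot>\<^sub>v v"
    unfolding eigenvector_def using A by auto
  have evi: "lam * v $ i = (\<Sum>j<n. complex_of_real (Q $$ (i,j)) * v $ j)" if "i < n" for i
  proof -
    have "lam * v $ i = (lam \<cdot>\<^sub>v v) $ i" using v that by auto
    also have "\<dots> = (?A *\<^sub>v v) $ i" using v by simp
    also have "\<dots> = (\<Sum>j<n. ?A $$ (i,j) * v $ j)" by (rule mv_sum[OF A v(1) that])
    also have "\<dots> = (\<Sum>j<n. complex_of_real (Q $$ (i,j)) * v $ j)"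
      using Q that by (intro sum.cong) auto
    finally show ?thesis .
  qed
  define f where "f i = norm (v $ i) / y i" for i
  define M where "M = Max (f ` {..<n})"
  have Mm: "M \<in> f ` {..<n}" unfolding M_def using n by (intro Max_in) auto
  then obtain i0 where i0: "i0 < n" "f i0 = M" by auto
  have fle: "f j \<le> M" if "j < n" for j unfolding M_def using that by (intro Max_ge) auto
  obtain j0 where j0: "j0 < n" "v $ j0 \<noteq> 0"
  proof -
    have "\<not> (\<forall>j<n. v $ j = 0)"
    proof
      assume "\<forall>j<n. v $ j = 0"
      hence "v = 0\<^sub>v n" using v(1) by (intro eq_vecI) auto
      with v(2) show False by simp
    qed
    thus ?thesis using that by auto
  qed
  have "f j0 > 0" unfolding f_def using j0 ypos by auto
  hence Mpos: "M > 0" using fle[OF j0(1)] by linarith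
  have nvi0: "norm (v $ i0) = M * y i0" using i0 ypos unfolding f_def by auto
  have "norm lam * norm (v $ i0) = norm (\<Sum>j<n. complex_of_real (Q $$ (i0,j)) * v $ j)"
    using evi[OF i0(1)] by (metis norm_mult)
  also have "\<dots> \<le> (\<Sum>j<n. norm (complex_of_real (Q $$ (i0,j)) * v $ j))" by (rule norm_sum)
  also have "\<dots> = (\<Sum>j<n. Q $$ (i0,j) * norm (v $ j))"
    using nn i0 by (intro sum.cong) (auto simp: norm_mult)
  also have "\<dots> \<le> (\<Sum>j<n. Q $$ (i0,j) * (M * y j))"
  proof (rule sum_mono)
    fix j assume "j \<in> {..<n}"
    hence j: "j < n" by auto
    have "norm (v $ j) \<le> M * y j" using fle[OF j] ypos j unfolding f_def
      by (auto simp: divide_le_eq)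
    thus "Q $$ (i0,j) * norm (v $ j) \<le> Q $$ (i0,j) * (M * y j)"
      using nn i0 j by (auto intro: mult_left_mono)
  qed
  also have "\<dots> = M * (\<Sum>j<n. Q $$ (i0,j) * y j)" by (simp add: sum_distrib_left mult_ac)
  also have "\<dots> \<le> M * (\<mu> * y i0)" using eig i0 Mpos by (auto intro: mult_left_mono)
  finally have "norm lam * (M * y i0) \<le> \<mu> * (M * y i0)" unfolding nvi0 by (simp add: mult_ac)
  moreover have "M * y i0 > 0" using Mpos ypos i0 by auto
  ultimately have "norm lam \<le> \<mu>" using mult_le_cancel_right_pos by blast
  thus ?thesis using r by simp
qed

lemma sr_lower:
  fixes Q :: "real mat"
  assumes Q: "Q \<in> carrier_mat n n" and n: "n > 0"
    and nn: "\<forall>i<n. \<forall>j<n. Q $$ (i,j) \<ge> 0" and ypos: "\<forall>i<n. y i > 0"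
    and c: "c > 0"
    and gr: "\<forall>i<n. (\<Sum>j<n. Q $$ (i,j) * y j) \<ge> c * y i"
  shows "spectral_radius (map_mat complex_of_real Q) \<ge> c"
proof (rule ccontr)
  let ?A = "map_mat complex_of_real Q"
  have A: "?A \<in> carrier_mat n n" using Q by auto
  assume "\<not> c \<le> spectral_radius ?A"
  hence lt: "spectral_radius ?A < c" by simp
  define \<rho> where "\<rho> = spectral_radius ?A"
  have r0: "\<rho> \<ge> 0" using spectral_radius_mem_max(1)[OF A n] unfolding \<rho>_def by auto
  define r where "r = (\<rho> + c) / 2"
  have r: "r > 0" "\<rho> < r" "r < c" using r0 lt unfolding r_def \<rho>_def by auto
  define Q' where "Q' = mat n n (\<lambda>(i,j). Q $$ (i,j) / r)"
  have Q': "Q' \<in> carrier_mat n n" unfolding Q'_def by auto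
  let ?A' = "map_mat complex_of_real Q'"
  have A': "?A' \<in> carrier_mat n n" using Q' by auto
  have "spectral_radius ?A' < 1"
  proof -
    from spectral_radius_mem_max(1)[OF A' n] obtain lam where
      lam: "lam \<in> spectrum ?A'" and sr: "spectral_radius ?A' = norm lam" by auto
    from lam obtain v where ev: "eigenvector ?A' v lam" unfolding spectrum_def eigenvalue_def by auto
    hence v: "v \<in> carrier_vec n" "v \<noteq> 0\<^sub>v n" "?A' *\<^sub>v v = lam \<cdot>\<^sub>v v"
      unfolding eigenvector_def using A' by auto
    have "?A *\<^sub>v v = (complex_of_real r * lam) \<cdot>\<^sub>v v"
    proof (rule eq_vecI)
      fix i assume "i < dim_vec ((complex_of_real r * lam) \<cdot>\<^sub>v v)"
      hence i: "i < n" using v by auto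
      have "lam * v $ i = (?A' *\<^sub>v v) $ i" using v i by auto
      also have "\<dots> = (\<Sum>j<n. ?A' $$ (i,j) * v $ j)" by (rule mv_sum[OF A' v(1) i])
      also have "\<dots> = (\<Sum>j<n. complex_of_real (Q $$ (i,j)) * v $ j) / complex_of_real r"
        unfolding sum_divide_distrib using Q i
        by (intro sum.cong) (auto simp: Q'_def)
      finally have "complex_of_real r * lam * v $ i = (\<Sum>j<n. complex_of_real (Q $$ (i,j)) * v $ j)"
        using r by (simp add: field_simps)
      also have "\<dots> = (\<Sum>j<n. ?A $$ (i,j) * v $ j)" using Q i by (intro sum.cong) auto
      also have "\<dots> = (?A *\<^sub>v v) $ i" by (rule mv_sum[OF A v(1) i, symmetric])
      finally show "(?A *\<^sub>v v) $ i = ((complex_of_real r * lam) \<cdot>\<^sub>v v) $ i" using v i by simp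
    qed (use v A in auto)
    hence "eigenvector ?A v (complex_of_real r * lam)" using v A unfolding eigenvector_def by auto
    hence "complex_of_real r * lam \<in> spectrum ?A" unfolding spectrum_def eigenvalue_def by auto
    hence "norm (complex_of_real r * lam) \<le> \<rho>" unfolding \<rho>_def
      by (intro spectral_radius_mem_max(2)[OF A n]) auto
    hence "r * norm lam \<le> \<rho>" using r by (simp add: norm_mult)
    hence "r * norm lam < r * 1" using r by linarith
    hence "norm lam < 1" using r by (meson mult_less_cancel_left_pos)
    thus ?thesis using sr by simp
  qed
  from spectral_radius_jnf_norm_bound_less_1_upper_triangular[OF A' this]
  obtain C where C: "\<And>k. norm_bound (?A' ^\<^sub>m k) C" by auto
  have Cb: "\<bar>(Q' ^\<^sub>m k) $$ (i,j)\<bar> \<le> C" if "i < n" "j < n" for i j k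
  proof -
    have "?A' ^\<^sub>m k = map_mat complex_of_real (Q' ^\<^sub>m k)"
      by (rule of_real_hom.mat_hom_pow[OF Q', symmetric])
    with C[of k] that Q' have "norm (complex_of_real ((Q' ^\<^sub>m k) $$ (i,j))) \<le> C"
      unfolding norm_bound_def by auto
    thus ?thesis by simp
  qed
  define g where "g = c / r"
  have g: "g > 1" using r unfolding g_def by auto
  have Q'nn: "\<forall>i<n. \<forall>j<n. Q' $$ (i,j) \<ge> 0" using nn r unfolding Q'_def by auto
  have Q'gr: "\<forall>i<n. (\<Sum>j<n. Q' $$ (i,j) * y j) \<ge> g * y i"
  proof (intro allI impI)
    fix i assume i: "i < n"
    have "(\<Sum>j<n. Q' $$ (i,j) * y j) = (\<Sum>j<n. Q $$ (i,j) * y j) / r"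
      unfolding sum_divide_distrib using i by (intro sum.cong) (auto simp: Q'_def)
    also have "\<dots> \<ge> (c * y i) / r" using gr i r by (auto intro: divide_right_mono)
    finally show "(\<Sum>j<n. Q' $$ (i,j) * y j) \<ge> g * y i" unfolding g_def by simp
  qed
  define yv where "yv = vec n y"
  have yv: "yv \<in> carrier_vec n" unfolding yv_def by auto
  have growth: "\<forall>i<n. (Q' ^\<^sub>m k *\<^sub>v yv) $ i \<ge> 1 * g ^ k * y i" for k
  proof -
    have pg: "\<forall>u \<in> carrier_vec n. \<forall>\<beta>\<ge>0. (\<forall>i<n. u $ i \<ge> \<beta> * y i) \<longrightarrow>
           (\<forall>i<n. (Q' ^\<^sub>m k *\<^sub>v u) $ i \<ge> \<beta> * g ^ k * y i)"
      by (rule pow_growth[OF Q' Q'nn _ _ Q'gr]) (use g ypos in \<open>auto simp: less_imp_le\<close>)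
    have h1: "\<forall>i<n. yv $ i \<ge> 1 * y i" unfolding yv_def by auto
    have h: "\<forall>\<beta>\<ge>0. (\<forall>i<n. yv $ i \<ge> \<beta> * y i) \<longrightarrow>
           (\<forall>i<n. (Q' ^\<^sub>m k *\<^sub>v yv) $ i \<ge> \<beta> * g ^ k * y i)" using pg yv by (rule bspec)
    have "(\<forall>i<n. yv $ i \<ge> 1 * y i) \<longrightarrow>
           (\<forall>i<n. (Q' ^\<^sub>m k *\<^sub>v yv) $ i \<ge> 1 * g ^ k * y i)" using spec[OF h, of 1] by simp
    with h1 show ?thesis by simp
  qed
  define Y where "Y = (\<Sum>j<n. y j)"
  obtain k where k: "C * Y / y 0 < g ^ k" using real_arch_pow[OF g] by blast
  have "g ^ k * y 0 \<le> (Q' ^\<^sub>m k *\<^sub>v yv) $ 0" using growth[of k] n by auto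
  also have "\<dots> = (\<Sum>j<n. (Q' ^\<^sub>m k) $$ (0,j) * yv $ j)"
    by (rule mv_sum[OF pow_carrier_mat[OF Q'] yv n])
  also have "\<dots> \<le> (\<Sum>j<n. C * y j)"
  proof (rule sum_mono)
    fix j assume "j \<in> {..<n}"
    hence j: "j < n" by auto
    have "(Q' ^\<^sub>m k) $$ (0,j) * y j \<le> \<bar>(Q' ^\<^sub>m k) $$ (0,j)\<bar> * y j"
      using ypos j by (intro mult_right_mono) auto
    also have "\<dots> \<le> C * y j" using Cb[OF n j] ypos j by (intro mult_right_mono) auto
    finally show "(Q' ^\<^sub>m k) $$ (0,j) * yv $ j \<le> C * y j" using j unfolding yv_def by simp
  qed
  also have "\<dots> = C * Y" unfolding Y_def by (simp add: sum_distrib_left)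
  finally have "g ^ k * y 0 \<le> C * Y" .
  hence "g ^ k \<le> C * Y / y 0" using ypos n by (simp add: le_divide_eq)
  with k show False by simp
qed



lemma walk_single: "i < n \<Longrightarrow> is_walk n E [i]"
  unfolding is_walk_def by auto

lemma gdist_self: "i < n \<Longrightarrow> gdist n E i i = 0"
  unfolding gdist_def using walk_single[of i n E] by (intro Least_eq_0 exI[of _ "[i]"]) auto

lemma gdist_pos:
  assumes conn: "connected_graph n E" and ij: "i < n" "j < n" "i \<noteq> j"
  shows "gdist n E i j \<ge> 1"
proof -
  from conn ij obtain p where p: "is_walk n E p" "hd p = i" "last p = j"
    unfolding connected_graph_def by blast
  hence "length p = Suc (length p - 1)" unfolding is_walk_def by (cases p) auto
  with p have ex: "\<exists>k. \<exists>p. is_walk n E p \<and> hd p = i \<and> last p = j \<and> length p = Suc k" by blast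
  from LeastI_ex[OF ex] obtain q where q: "is_walk n E q" "hd q = i" "last q = j"
    "length q = Suc (gdist n E i j)" unfolding gdist_def by blast
  show ?thesis
  proof (rule ccontr)
    assume "\<not> 1 \<le> gdist n E i j"
    hence "length q = Suc 0" using q by simp
    then obtain x where "q = [x]" by (auto simp: length_Suc_conv)
    with q ij show False by simp
  qed
qed

theorem theorem8:
  fixes n :: nat and E :: "nat \<Rightarrow> nat \<Rightarrow> bool" and \<alpha> :: real
    and s :: "nat \<Rightarrow> real" and S T :: real
  assumes graph: "simple_graph n E"
    and conn: "connected_graph n E"
    and n2: "n \<ge> 2"
    and s_def: "\<And>k. s k = gen_avg_trans n E \<alpha> k + transmission n E k"
    and sorted: "\<And>i j. i \<le> j \<Longrightarrow> j < n \<Longrightarrow> s j \<le> s i"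
    and S_def: "S = Min {transmission n E i | i. i < n}"
    and T_def: "T = Min {real (gdist n E i j) * transmission n E j powr \<alpha> / transmission n E i powr \<alpha>
                          | i j. i < n \<and> j < n \<and> i \<noteq> j}"
  shows "(rho (DQ_mat n E) \<ge>
           (s (n-1) + S - T + sqrt ((s (n-1) - S + T)\<^sup>2 + 4 * T * (\<Sum>k<n-1. s k - s (n-1)))) / 2) \<and>
         (rho (DQ_mat n E) =
           (s (n-1) + S - T + sqrt ((s (n-1) - S + T)\<^sup>2 + 4 * T * (\<Sum>k<n-1. s k - s (n-1)))) / 2
         \<longleftrightarrow> (\<forall>k<n. s k = s 0) \<or>
             (\<exists>t. 2 \<le> t \<and> t \<le> n \<and>
                (\<forall>k<t-1. transmission n E k = S) \<and>
                (\<forall>k<n. \<forall>l<t-1. k \<noteq> l \<longrightarrow>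
                    real (gdist n E k l) * transmission n E l powr \<alpha> / transmission n E k powr \<alpha> = T) \<and>
                (\<forall>k. t-1 \<le> k \<and> k < n \<longrightarrow> s k = s (n-1))))"
proof -
  define D where "D i = transmission n E i" for i
  define a where "a i = D i powr \<alpha>" for i
  define gd where "gd i j = real (gdist n E i j)" for i j
  define b where "b i j = (if i = j then D i else 0) + gd i j * a j / a i" for i j
  define Q where "Q = DQ_mat n E"
  define sn where "sn = s (n-1)"
  define N where "N = (\<Sum>k<n-1. s k - sn)"
  define R where "R = sqrt ((sn - S + T)\<^sup>2 + 4 * T * N)"
  define \<mu> where "\<mu> = (sn + S - T + R) / 2"
  have n0: "n > 0" and n1: "n - 1 < n" and n10: "n - 1 \<noteq> 0" using n2 by auto
  have gd0: "gd i i = 0" if "i < n" for i using gdist_self[OF that] unfolding gd_def by simp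
  have gd1: "gd i j \<ge> 1" if "i < n" "j < n" "i \<noteq> j" for i j
    using gdist_pos[OF conn that] unfolding gd_def by simp
  have gdnn: "gd i j \<ge> 0" for i j unfolding gd_def by simp
  have Dpos: "D i > 0" if i: "i < n" for i
  proof -
    define j' :: nat where "j' = (if i = 0 then 1 else 0)"
    have j': "j' < n" "j' \<noteq> i" unfolding j'_def using n2 by auto
    have "gd i j' \<le> (\<Sum>j<n. gd i j)"
      by (rule member_le_sum) (use j' gdnn in auto)
    hence "gd i j' \<le> D i" unfolding D_def transmission_def gd_def .
    with gd1[OF i j'(1)] j' show ?thesis by auto
  qed
  have apos: "a i > 0" if "i < n" for i unfolding a_def using Dpos[OF that] by simp
  have Qc: "Q \<in> carrier_mat n n" unfolding Q_def DQ_mat_def by simp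
  have Qij: "Q $$ (i,j) = (if i = j then D i else 0) + gd i j" if "i < n" "j < n" for i j
    unfolding Q_def DQ_mat_def D_def gd_def using that by simp
  have Qpos: "Q $$ (i,j) > 0" if "i < n" "j < n" for i j
    using Qij[OF that] Dpos[OF that(1)] gd1[OF that] gdnn[of i j] by (cases "i = j") auto
  have Qnn: "\<forall>i<n. \<forall>j<n. Q $$ (i,j) \<ge> 0" using Qpos by (auto simp: less_imp_le)
  have Qb: "Q $$ (i,j) * a j = a i * b i j" if "i < n" "j < n" for i j
    using Qij[OF that] apos[OF that(1)] unfolding b_def by (auto simp: field_simps)
  have bii: "b i i = D i" if "i < n" for i unfolding b_def using gd0[OF that] by simp
  have bij: "b i j = gd i j * a j / a i" if "i \<noteq> j" for i j unfolding b_def using that by simp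
  have bnn: "b i j \<ge> 0" if "i < n" "j < n" for i j
    unfolding b_def using Dpos[OF that(1)] apos[OF that(1)] apos[OF that(2)] gdnn[of i j] by auto
  have srow: "s i = (\<Sum>j<n. b i j)" if i: "i < n" for i
  proof -
    have "(\<Sum>j<n. b i j) = (\<Sum>j<n. (if i = j then D i else 0)) + (\<Sum>j<n. gd i j * a j / a i)"
      unfolding b_def by (simp add: sum.distrib)
    also have "(\<Sum>j<n. (if i = j then D i else 0)) = D i" using i by simp
    also have "(\<Sum>j<n. gd i j * a j / a i) = gen_avg_trans n E \<alpha> i"
      unfolding gen_avg_trans_def sum_divide_distrib gd_def a_def D_def ..
    finally show ?thesis using s_def[of i] unfolding D_def by simp
  qed
  have finS: "finite {transmission n E i | i. i < n}" by simp
  have S_le: "S \<le> D i" if "i < n" for i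
    unfolding S_def D_def by (rule Min_le[OF finS]) (use that in auto)
  define f where "f i j = real (gdist n E i j) * transmission n E j powr \<alpha> / transmission n E i powr \<alpha>" for i j
  have fb: "f i j = b i j" if "i \<noteq> j" for i j unfolding f_def bij[OF that] gd_def a_def D_def ..
  have Tset: "{real (gdist n E i j) * transmission n E j powr \<alpha> / transmission n E i powr \<alpha>
                          | i j. i < n \<and> j < n \<and> i \<noteq> j} = {f i j | i j. i < n \<and> j < n \<and> i \<noteq> j}"
    unfolding f_def ..
  have finT: "finite {f i j | i j. i < n \<and> j < n \<and> i \<noteq> j}"
  proof (rule finite_subset)
    show "{f i j | i j. i < n \<and> j < n \<and> i \<noteq> j} \<subseteq> (\<lambda>(i,j). f i j) ` ({..<n} \<times> {..<n})" by auto
  qed auto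
  have T_le: "T \<le> b i j" if "i < n" "j < n" "i \<noteq> j" for i j
  proof -
    have "T \<le> f i j" unfolding T_def Tset by (rule Min_le[OF finT]) (use that in auto)
    thus ?thesis using fb[OF that(3)] by simp
  qed
  have Tpos: "T > 0"
  proof -
    have "f 0 1 \<in> {f i j | i j. i < n \<and> j < n \<and> i \<noteq> j}" unfolding mem_Collect_eq
      by (rule exI[of _ 0], rule exI[of _ 1]) (use n2 in auto)
    hence "{f i j | i j. i < n \<and> j < n \<and> i \<noteq> j} \<noteq> {}" by blast
    from Min_in[OF finT this] obtain i j where ij: "i < n" "j < n" "i \<noteq> j" and "T = f i j"
      unfolding T_def Tset by auto
    hence "T = gd i j * a j / a i" using fb bij by simp
    thus ?thesis using gd1[OF ij] apos ij by auto
  qed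
  have s_ge: "s j \<ge> sn" if "j < n" for j unfolding sn_def using sorted[of j "n-1"] that by auto
  have snST: "sn \<ge> S + T"
  proof -
    have "(\<Sum>j\<in>{n-1, 0}. b (n-1) j) \<le> (\<Sum>j<n. b (n-1) j)"
      by (rule sum_mono2) (use n0 bnn n1 in auto)
    moreover have "(\<Sum>j\<in>{n-1, 0}. b (n-1) j) = b (n-1) (n-1) + b (n-1) 0" using n10 by simp
    moreover have "b (n-1) (n-1) \<ge> S" using bii[OF n1] S_le[OF n1] by simp
    moreover have "b (n-1) 0 \<ge> T" using T_le[OF n1 n0 n10] .
    ultimately show ?thesis using srow[OF n1] unfolding sn_def by linarith
  qed
  have Nnn: "N \<ge> 0" unfolding N_def by (rule sum_nonneg) (use s_ge in auto)
  have radnn: "0 \<le> (sn - S + T)\<^sup>2 + 4 * T * N"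
  proof -
    have "4 * T * N \<ge> 0" using Nnn Tpos by simp
    thus ?thesis by (simp add: add_nonneg_nonneg)
  qed
  have R0: "R \<ge> 0" unfolding R_def using radnn by simp
  have R2: "R\<^sup>2 = (sn - S + T)\<^sup>2 + 4 * T * N" unfolding R_def
    by (rule real_sqrt_pow2[OF radnn])
  define c where "c = \<mu> - S + T"
  have cpos: "c > 0"
  proof -
    have "sn - S + T + R > 0" using snST Tpos R0 by linarith
    hence "(sn - S + T + R) / 2 > 0" by simp
    moreover have "c = (sn - S + T + R) / 2" unfolding c_def \<mu>_def by (simp add: field_simps)
    ultimately show ?thesis by simp
  qed
  have key: "(\<mu> - sn) * c = T * N"
  proof -
    have "(\<mu> - sn) * c = (R\<^sup>2 - (sn - S + T)\<^sup>2) / 4"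
      unfolding c_def \<mu>_def by (simp add: power2_eq_square field_simps)
    thus ?thesis using R2 by simp
  qed
  have mu_sn: "\<mu> \<ge> sn"
  proof -
    have "(\<mu> - sn) * c \<ge> 0" using key Tpos Nnn by simp
    thus ?thesis using cpos by (simp add: zero_le_mult_iff)
  qed
  have Spos: "S > 0"
  proof -
    have "{transmission n E i | i. i < n} \<noteq> {}" using n0 by auto
    from Min_in[OF finS this] obtain i where "i < n" "S = D i" unfolding S_def D_def by auto
    thus ?thesis using Dpos by simp
  qed
  have mupos: "\<mu> > 0" using mu_sn snST Tpos Spos by linarith
  define w where "w j = (s j - sn) / c" for j
  have wnn: "w j \<ge> 0" if "j < n" for j unfolding w_def using s_ge[OF that] cpos by simp
  define W where "W = (\<Sum>j<n. w j)"
  have TW: "T * W = \<mu> - sn"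
  proof -
    have "(\<Sum>j<n. s j - sn) = N + (s (n-1) - sn)"
    proof -
      obtain m where m: "n = Suc m" using n0 by (cases n) auto
      show ?thesis unfolding N_def m by simp
    qed
    hence "(\<Sum>j<n. s j - sn) = N" unfolding sn_def by simp
    hence "W = N / c" unfolding W_def w_def sum_divide_distrib[symmetric] by simp
    hence Wc: "W * c = N" using cpos by simp
    have "(T * W) * c = (\<mu> - sn) * c" unfolding key mult.assoc Wc ..
    thus ?thesis using cpos by simp
  qed
  define z where "z j = 1 + w j" for j
  define y where "y j = a j * z j" for j
  have ypos: "\<forall>i<n. y i > 0" unfolding y_def z_def using apos wnn
    by (auto intro!: mult_pos_pos add_pos_nonneg)
  define def where "def i = (\<Sum>j<n. (b i j - (if j = i then S else T)) * w j)" for i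
  have term_nn: "(b i j - (if j = i then S else T)) * w j \<ge> 0" if "i < n" "j < n" for i j
  proof -
    have "b i j - (if j = i then S else T) \<ge> 0"
      using bii[OF that(1)] S_le[OF that(1)] T_le[OF that] by (cases "j = i") auto
    thus ?thesis using wnn[OF that(2)] by simp
  qed
  have def_nn: "def i \<ge> 0" if "i < n" for i
    unfolding def_def by (rule sum_nonneg) (use term_nn that in auto)
  have Bz: "(\<Sum>j<n. b i j * z j) = \<mu> * z i + def i" if i: "i < n" for i
  proof -
    have e1: "(\<Sum>j<n. (if j = i then S else T) * w j) = T * W + (S - T) * w i"
    proof -
      have "(\<Sum>j<n. (if j = i then S else T) * w j) = (\<Sum>j<n. T * w j + (if j = i then (S - T) * w j else 0))"
        by (intro sum.cong) (auto simp: algebra_simps)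
      also have "\<dots> = T * W + (S - T) * w i" using i
        by (simp add: sum.distrib W_def sum_distrib_left)
      finally show ?thesis .
    qed
    have e2a: "(\<Sum>j<n. b i j * w j) = (\<Sum>j<n. (if j = i then S else T) * w j + (b i j - (if j = i then S else T)) * w j)"
      by (rule sum.cong) (simp_all add: algebra_simps)
    have e2: "(\<Sum>j<n. b i j * w j) = (\<Sum>j<n. (if j = i then S else T) * w j) + def i"
      unfolding e2a def_def by (rule sum.distrib)
    have e3: "(\<Sum>j<n. b i j * z j) = s i + (\<Sum>j<n. b i j * w j)"
      unfolding z_def srow[OF i] by (simp add: sum.distrib algebra_simps)
    have cw: "(\<mu> - S + T) * w i = s i - sn" unfolding w_def c_def[symmetric] using cpos by simp
    hence cw': "\<mu> * w i - S * w i + T * w i = s i - sn" by (simp add: algebra_simps)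
    have "(\<Sum>j<n. b i j * z j) = s i + T * W + S * w i - T * w i + def i"
      using e1 e2 e3 by (simp add: algebra_simps)
    also have "\<dots> = \<mu> * z i + def i" unfolding z_def using TW cw' by (simp add: algebra_simps)
    finally show ?thesis .
  qed
  have Qy: "(\<Sum>j<n. Q $$ (i,j) * y j) = \<mu> * y i + a i * def i" if i: "i < n" for i
  proof -
    have "(\<Sum>j<n. Q $$ (i,j) * y j) = (\<Sum>j<n. a i * (b i j * z j))"
      unfolding y_def by (intro sum.cong) (use Qb i in \<open>auto simp: mult.assoc[symmetric]\<close>)
    also have "\<dots> = a i * (\<mu> * z i + def i)" unfolding sum_distrib_left[symmetric] Bz[OF i] ..
    finally show ?thesis unfolding y_def by (simp add: algebra_simps)
  qed
  have rhoQ: "rho (DQ_mat n E) = spectral_radius (map_mat complex_of_real Q)"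
    unfolding rho_def Q_def ..
  have muE: "(s (n-1) + S - T + sqrt ((s (n-1) - S + T)\<^sup>2 + 4 * T * (\<Sum>k<n-1. s k - s (n-1)))) / 2 = \<mu>"
    unfolding \<mu>_def R_def N_def sn_def ..
  have P1: "rho (DQ_mat n E) \<ge> \<mu>"
    unfolding rhoQ
  proof (rule sr_lower[OF Qc n0 Qnn ypos mupos], intro allI impI)
    fix i assume i: "i < n"
    have "a i * def i \<ge> 0" using apos[OF i] def_nn[OF i] by simp
    thus "\<mu> * y i \<le> (\<Sum>j<n. Q $$ (i,j) * y j)" using Qy[OF i] by simp
  qed
  have P2: "rho (DQ_mat n E) = \<mu> \<longleftrightarrow> (\<forall>i<n. def i = 0)"
  proof
    assume all0: "\<forall>i<n. def i = 0"
    have "rho (DQ_mat n E) \<le> \<mu>" unfolding rhoQ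
      by (rule sr_upper[OF Qc n0 Qnn ypos]) (use Qy all0 in simp)
    thus "rho (DQ_mat n E) = \<mu>" using P1 by simp
  next
    assume eq: "rho (DQ_mat n E) = \<mu>"
    show "\<forall>i<n. def i = 0"
    proof (rule ccontr)
      assume "\<not> (\<forall>i<n. def i = 0)"
      then obtain i0 where i0: "i0 < n" "def i0 \<noteq> 0" by auto
      hence d0: "def i0 > 0" using def_nn[OF i0(1)] by simp
      define y' where "y' i = (\<Sum>j<n. Q $$ (i,j) * y j)" for i
      have y'eq: "y' i = \<mu> * y i + a i * def i" if "i<n" for i using Qy[OF that] unfolding y'_def .
      have y'pos: "\<forall>i<n. y' i > 0"
      proof (intro allI impI)
        fix i assume i: "i<n"
        have "a i * def i \<ge> 0" using apos[OF i] def_nn[OF i] by simp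
        moreover have "\<mu> * y i > 0" using mupos ypos i by simp
        ultimately show "y' i > 0" using y'eq[OF i] by simp
      qed
      have strict: "(\<Sum>j<n. Q $$ (i,j) * y' j) > \<mu> * y' i" if i: "i < n" for i
      proof -
        have "(\<Sum>j<n. Q $$ (i,j) * y' j) = (\<Sum>j<n. \<mu> * (Q $$ (i,j) * y j) + Q $$ (i,j) * (a j * def j))"
          by (rule sum.cong) (simp_all add: y'eq algebra_simps)
        also have "\<dots> = \<mu> * y' i + (\<Sum>j<n. Q $$ (i,j) * (a j * def j))"
          by (simp add: sum.distrib sum_distrib_left[symmetric] y'_def)
        finally have e: "(\<Sum>j<n. Q $$ (i,j) * y' j) = \<mu> * y' i + (\<Sum>j<n. Q $$ (i,j) * (a j * def j))" .
        have "Q $$ (i,i0) * (a i0 * def i0) \<le> (\<Sum>j<n. Q $$ (i,j) * (a j * def j))"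
        proof (rule member_le_sum)
          show "i0 \<in> {..<n}" using i0 by simp
          fix x assume "x \<in> {..<n} - {i0}"
          hence x: "x < n" by simp
          show "0 \<le> Q $$ (i,x) * (a x * def x)"
            using Qpos[OF i x] apos[OF x] def_nn[OF x] by simp
        qed simp
        moreover have "Q $$ (i,i0) * (a i0 * def i0) > 0" using Qpos[OF i i0(1)] apos[OF i0(1)] d0 by simp
        ultimately show ?thesis using e by simp
      qed
      define ratio where "ratio i = (\<Sum>j<n. Q $$ (i,j) * y' j) / y' i" for i
      define \<mu>' where "\<mu>' = Min (ratio ` {..<n})"
      have "\<mu>' \<in> ratio ` {..<n}" unfolding \<mu>'_def using n0 by (intro Min_in) auto
      then obtain i1 where i1: "i1 < n" "\<mu>' = ratio i1" by auto
      have mu'gt: "\<mu>' > \<mu>" using strict[OF i1(1)] y'pos i1 unfolding ratio_def by (simp add: less_divide_eq)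
      have "rho (DQ_mat n E) \<ge> \<mu>'" unfolding rhoQ
      proof (rule sr_lower[OF Qc n0 Qnn y'pos])
        show "\<mu>' > 0" using mu'gt mupos by linarith
        show "\<forall>i<n. (\<Sum>j<n. Q $$ (i,j) * y' j) \<ge> \<mu>' * y' i"
        proof (intro allI impI)
          fix i assume i: "i<n"
          have "\<mu>' \<le> ratio i" unfolding \<mu>'_def using i by (intro Min_le) auto
          thus "(\<Sum>j<n. Q $$ (i,j) * y' j) \<ge> \<mu>' * y' i" using y'pos i unfolding ratio_def by (simp add: le_divide_eq)
        qed
      qed
      with eq mu'gt show False by simp
    qed
  qed
  have P3: "(\<forall>i<n. def i = 0) \<longleftrightarrow> ((\<forall>k<n. s k = s 0) \<or>
             (\<exists>t. 2 \<le> t \<and> t \<le> n \<and>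
                (\<forall>k<t-1. transmission n E k = S) \<and>
                (\<forall>k<n. \<forall>l<t-1. k \<noteq> l \<longrightarrow>
                    real (gdist n E k l) * transmission n E l powr \<alpha> / transmission n E k powr \<alpha> = T) \<and>
                (\<forall>k. t-1 \<le> k \<and> k < n \<longrightarrow> s k = s (n-1))))"
  proof -
    have wz: "w j = 0 \<longleftrightarrow> s j = sn" for j unfolding w_def using cpos by simp
    have step1: "(\<forall>i<n. def i = 0) \<longleftrightarrow> (\<forall>i<n. \<forall>j<n. (b i j - (if j = i then S else T)) * w j = 0)"
    proof -
      have "def i = 0 \<longleftrightarrow> (\<forall>j<n. (b i j - (if j = i then S else T)) * w j = 0)" if i: "i<n" for i
        unfolding def_def using term_nn[OF i] by (subst sum_nonneg_eq_0_iff) auto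
      thus ?thesis by auto
    qed
    define C where "C \<longleftrightarrow> (\<forall>j<n. s j \<noteq> sn \<longrightarrow> D j = S \<and> (\<forall>i<n. i \<noteq> j \<longrightarrow> b i j = T))"
    have step2: "(\<forall>i<n. \<forall>j<n. (b i j - (if j = i then S else T)) * w j = 0) \<longleftrightarrow> C"
    proof
      assume H: "\<forall>i<n. \<forall>j<n. (b i j - (if j = i then S else T)) * w j = 0"
      show C unfolding C_def
      proof (intro allI impI)
        fix j assume j: "j < n" and sj: "s j \<noteq> sn"
        hence wj: "w j \<noteq> 0" using wz by simp
        have "(b j j - (if j = j then S else T)) * w j = 0" using H j by blast
        hence "b j j = S" using wj by simp
        hence h1: "D j = S" using bii[OF j] by simp
        have h2: "\<forall>i<n. i \<noteq> j \<longrightarrow> b i j = T"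
        proof (intro allI impI)
          fix i assume i: "i < n" "i \<noteq> j"
          have "(b i j - (if j = i then S else T)) * w j = 0" using H j i by blast
          thus "b i j = T" using wj i by simp
        qed
        show "D j = S \<and> (\<forall>i<n. i \<noteq> j \<longrightarrow> b i j = T)" using h1 h2 by simp
      qed
    next
      assume C
      show "\<forall>i<n. \<forall>j<n. (b i j - (if j = i then S else T)) * w j = 0"
      proof (intro allI impI)
        fix i j assume i: "i<n" and j: "j<n"
        show "(b i j - (if j = i then S else T)) * w j = 0"
        proof (cases "s j = sn")
          case True thus ?thesis using wz by simp
        next
          case False
          with \<open>C\<close> j have "D j = S" "\<forall>i<n. i \<noteq> j \<longrightarrow> b i j = T" unfolding C_def by auto
          thus ?thesis using bii[OF j] i by (cases "i = j") auto
        qed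
      qed
    qed
    have step3: "C \<longleftrightarrow> ((\<forall>k<n. s k = s 0) \<or>
             (\<exists>t. 2 \<le> t \<and> t \<le> n \<and>
                (\<forall>k<t-1. transmission n E k = S) \<and>
                (\<forall>k<n. \<forall>l<t-1. k \<noteq> l \<longrightarrow>
                    real (gdist n E k l) * transmission n E l powr \<alpha> / transmission n E k powr \<alpha> = T) \<and>
                (\<forall>k. t-1 \<le> k \<and> k < n \<longrightarrow> s k = s (n-1))))" (is "_ \<longleftrightarrow> ?disj")
    proof
      assume C
      show ?disj
      proof (cases "s 0 = sn")
        case True
        have "\<forall>k<n. s k = s 0"
        proof (intro allI impI)
          fix k assume k: "k<n"
          have "s k \<le> s 0" using sorted[of 0 k] k by simp
          moreover have "s k \<ge> sn" using s_ge[OF k] .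
          ultimately show "s k = s 0" using True by simp
        qed
        thus ?thesis by (rule disjI1)
      next
        case False
        define m where "m = (LEAST k. s k = sn)"
        have sm: "s m = sn" unfolding m_def by (rule LeastI[of _ "n-1"]) (simp add: sn_def)
        have mle: "m \<le> n - 1" unfolding m_def by (rule Least_le) (simp add: sn_def)
        have m0: "m \<noteq> 0"
        proof
          assume "m = 0"
          with sm False show False by simp
        qed
        have below: "s k \<noteq> sn" if "k < m" for k
          using not_less_Least[of k "\<lambda>k. s k = sn"] that unfolding m_def by simp
        have h3: "\<forall>k<m. transmission n E k = S"
        proof (intro allI impI)
          fix k assume k: "k < m"
          hence "k < n" using mle n1 by linarith
          with \<open>C\<close> below[OF k] have "D k = S" unfolding C_def by blast
          thus "transmission n E k = S" unfolding D_def .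
        qed
        have h4: "\<forall>k<n. \<forall>l<m. k \<noteq> l \<longrightarrow>
                    real (gdist n E k l) * transmission n E l powr \<alpha> / transmission n E k powr \<alpha> = T"
        proof (intro allI impI)
          fix k l assume k: "k < n" and l: "l < m" and kl: "k \<noteq> l"
          hence ln: "l < n" using mle n1 by linarith
          with \<open>C\<close> below[OF l] k kl have "b k l = T" unfolding C_def by blast
          thus "real (gdist n E k l) * transmission n E l powr \<alpha> / transmission n E k powr \<alpha> = T"
            using fb[OF kl] unfolding f_def by simp
        qed
        have h5: "\<forall>k. m \<le> k \<and> k < n \<longrightarrow> s k = s (n-1)"
        proof (intro allI impI)
          fix k assume k: "m \<le> k \<and> k < n"
          have "s k \<le> s m" using sorted[of m k] k by simp
          moreover have "s k \<ge> sn" using s_ge k by simp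
          ultimately show "s k = s (n-1)" using sm unfolding sn_def by simp
        qed
        have "2 \<le> Suc m" "Suc m \<le> n" using m0 mle n2 by auto
        thus ?thesis using h3 h4 h5 by (intro disjI2 exI[of _ "Suc m"] conjI) (simp_all only: diff_Suc_1)
      qed
    next
      assume disj: ?disj
      show C unfolding C_def
      proof (intro allI impI)
        fix j assume j: "j<n" and sj: "s j \<noteq> sn"
        from disj show "D j = S \<and> (\<forall>i<n. i \<noteq> j \<longrightarrow> b i j = T)"
        proof (elim disjE exE conjE)
          assume "\<forall>k<n. s k = s 0"
          hence "s j = s 0" "s (n-1) = s 0" using j n1 by blast+
          hence "s j = sn" unfolding sn_def by simp
          with sj show ?thesis by simp
        next
          fix t assume t: "2 \<le> t" "t \<le> n" and h3: "\<forall>k<t-1. transmission n E k = S"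
            and h4: "\<forall>k<n. \<forall>l<t-1. k \<noteq> l \<longrightarrow>
                    real (gdist n E k l) * transmission n E l powr \<alpha> / transmission n E k powr \<alpha> = T"
            and h5: "\<forall>k. t-1 \<le> k \<and> k < n \<longrightarrow> s k = s (n-1)"
          have jt: "j < t - 1"
          proof (rule ccontr)
            assume "\<not> j < t - 1"
            hence "t - 1 \<le> j \<and> j < n" using j by simp
            hence "s j = s (n-1)" using h5 by blast
            with sj show False unfolding sn_def by simp
          qed
          show ?thesis
          proof
            show "D j = S" using h3 jt unfolding D_def by blast
            show "\<forall>i<n. i \<noteq> j \<longrightarrow> b i j = T"
            proof (intro allI impI)
              fix i assume i: "i<n" and ij: "i\<noteq>j"
              hence "f i j = T" using h4 jt unfolding f_def by blast
              thus "b i j = T" using fb[OF ij] by simp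
            qed
          qed
        qed
      qed
    qed
    show ?thesis using step1 step2 step3 by simp
  qed
  show ?thesis unfolding muE using P1 P2 P3 by simp
qed


end
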